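(* Let $\alpha$ be a tame power series with pole order $\nu$, let $\mathbf B_\alpha$ be its Bernoulli operator (for any admissible choice of multi-power series), and let $f=\mathscr L(\varphi)$ with $\varphi\in\mathscr D(\mathscr L)$. Then: (i) $f\in\mathscr D(\mathbf B_\alpha)$; (ii) $\beta(u)\varphi(u)\in\mathscr D(\mathscr L)$ and $\mathbf B_\alpha f=\mathscr L(\beta(u)\varphi(u))$, where $\beta(u)=u^\nu\alpha(e^{-u})$; (iii) the series $\sum_{k\ge1}\frac{(-1)^{k+1}}{k}\Delta_1^kf(t)$ converges absolutely and locally uniformly in $t>0$ and its sum equals $f'(t)=\mathscr L(-u\varphi(u))(t)$. In particular $\mathbf B_\alpha$ maps $\{\mathscr L(\varphi):\varphi\in\mathscr D(\mathscr L)\}$ into itself.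
   Context: $\mathscr D(\mathscr L)$: measurable $\varphi:(0,\infty)\to\mathbb C$ integrable on every $(0,R)$ with $\int_0^\infty e^{-su}|\varphi(u)|du<\infty$ for all $\operatorname{Re}(s)>0$; $\mathscr L(\varphi)(t)=\int_0^\infty e^{-tu}\varphi(u)du$, $t>0$. Tame series: $\alpha(z)=\sum_{n\ge0}a_{n+1}z^n$ converging on the open unit disk, extending holomorphically to a punctured neighborhood of $z=1$ with a pole of order $\nu\ge0$ at $1$ ($\nu=0$: holomorphic at 1), such that $(z-1)^\nu\alpha(z)$ equals, on an open neighborhood of $(0,1]$, a multi-power series $\sum_{\mathbf i\in\mathbb Z^N_{\ge0}}c_{\mathbf i}\prod_{j}(z^{e_j}-1)^{i_j}$ ($N\ge1$, $e_j\in\mathbb Z_{>0}$) converging absolutely and uniformly there. Then $(-1)^\nu(\ln z)^\nu\alpha(z)$ also has such an expansion $\sum_{\mathbf i}c_{\mathbf i}\prod_j(z^{e_j}-1)^{i_j}$; fix one. For $g$ on $(0,\infty)$, $h>0$: $\mathbf E_hg(t)=g(t+h)$, $\Delta_h=\mathbf E_h-\mathrm{id}$, $\Delta_{\mathbf e}^{\mathbf i}=\Delta_{e_1}^{i_1}\cdots\Delta_{e_N}^{i_N}$. Bernoulli operator $\mathbf B_\alpha=\sum_{\mathbf i}c_{\mathbf i}\Delta_{\mathbf e}^{\mathbf i}$, with domain $\mathscr D(\mathbf B_\alpha)$ the functions $g:(0,\infty)\to\mathbb C$ for which $\sum_{\mathbf i}c_{\mathbf i}\Delta_{\mathbf e}^{\mathbf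 i}g(t)$ converges absolutely and locally uniformly in $t$; $\mathbf B_\alpha g$ is the sum. *)

theory Defs
  imports "HOL-Analysis.Analysis"
begin

definition laplace_dom :: "(real \<Rightarrow> complex) \<Rightarrow> bool" where
  "laplace_dom \<phi> \<longleftrightarrow>
     set_borel_measurable lborel {0<..} \<phi> \<and>
     (\<forall>R>0. set_integrable lborel {0<..<R} \<phi>) \<and>
     (\<forall>s::complex. Re s > 0 \<longrightarrow>
        set_integrable lborel {0<..} (\<lambda>u. exp (- s * of_real u) * \<phi> u))"

definition laplace :: "(real \<Rightarrow> complex) \<Rightarrow> real \<Rightarrow> complex" where
  "laplace \<phi> t = (LBINT u:{0<..}. exp (- of_real (t * u)) * \<phi> u)"

definition abs_unif_conv :: "'b set \<Rightarrow> 'a set \<Rightarrow> ('a \<Rightarrow> 'b \<Rightarrow> 'c::banach) \<Rightarrow> bool" where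
  "abs_unif_conv U I g \<longleftrightarrow>
     (\<forall>z\<in>U. (\<lambda>i. g i z) abs_summable_on I) \<and>
     (\<forall>\<epsilon>>0. \<exists>F. finite F \<and> F \<subseteq> I \<and>
        (\<forall>z\<in>U. (\<Sum>\<^sub>\<infinity>i\<in>I - F. norm (g i z)) < \<epsilon>))"

text \<open>Multi-indices in Z_{>=0}^N are functions nat => nat vanishing from N on.\<close>
definition mps_index :: "nat \<Rightarrow> (nat \<Rightarrow> nat) set" where
  "mps_index N = {i. \<forall>j\<ge>N. i j = 0}"

definition mps_term :: "nat \<Rightarrow> (nat \<Rightarrow> nat) \<Rightarrow> ((nat \<Rightarrow> nat) \<Rightarrow> complex)
    \<Rightarrow> (nat \<Rightarrow> nat) \<Rightarrow> complex \<Rightarrow> complex" where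
  "mps_term N e c i z = c i * (\<Prod>j<N. (z ^ e j - 1) ^ i j)"

text \<open>F equals (on U, away from the point 1 where F may be singular) the multi-power
  series with exponents e and coefficients c, converging absolutely and uniformly on the
  open neighbourhood U of (0,1].\<close>
definition mps_expansion :: "nat \<Rightarrow> (nat \<Rightarrow> nat) \<Rightarrow> ((nat \<Rightarrow> nat) \<Rightarrow> complex)
    \<Rightarrow> complex set \<Rightarrow> (complex \<Rightarrow> complex) \<Rightarrow> bool" where
  "mps_expansion N e c U F \<longleftrightarrow>
     open U \<and> of_real ` {0<..1} \<subseteq> U \<and> N \<ge> 1 \<and> (\<forall>j<N. e j > 0) \<and>
     abs_unif_conv U (mps_index N) (mps_term N e c) \<and>
     (\<forall>z\<in>U - {1}. F z = (\<Sum>\<^sub>\<infinity>i\<in>mps_index N. mps_term N e c i z))"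

definition tame :: "(complex \<Rightarrow> complex) \<Rightarrow> nat \<Rightarrow> bool" where
  "tame \<alpha> \<nu> \<longleftrightarrow>
     (\<exists>a::nat \<Rightarrow> complex. \<forall>z. norm z < 1 \<longrightarrow> (\<lambda>n. a (Suc n) * z ^ n) sums \<alpha> z) \<and>
     (\<exists>r>0. \<alpha> holomorphic_on (ball 0 1 \<union> ball 1 r) - {1} \<and>
        (\<exists>g. g holomorphic_on ball 1 r \<and>
             (\<forall>z\<in>ball 1 r - {1}. g z = (z - 1) ^ \<nu> * \<alpha> z) \<and>
             (\<nu> > 0 \<longrightarrow> g 1 \<noteq> 0))) \<and>
     (\<exists>N e c U. mps_expansion N e c U (\<lambda>z. (z - 1) ^ \<nu> * \<alpha> z))"

definition fdiff :: "real \<Rightarrow> (real \<Rightarrow> complex) \<Rightarrow> real \<Rightarrow> complex" where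
  "fdiff h g = (\<lambda>t. g (t + h) - g t)"

fun mdiff :: "nat \<Rightarrow> (nat \<Rightarrow> nat) \<Rightarrow> (nat \<Rightarrow> nat) \<Rightarrow> (real \<Rightarrow> complex) \<Rightarrow> real \<Rightarrow> complex" where
  "mdiff 0 e i g = g"
| "mdiff (Suc n) e i g = (fdiff (real (e n)) ^^ i n) (mdiff n e i g)"

definition bernoulli_dom :: "nat \<Rightarrow> (nat \<Rightarrow> nat) \<Rightarrow> ((nat \<Rightarrow> nat) \<Rightarrow> complex)
    \<Rightarrow> (real \<Rightarrow> complex) \<Rightarrow> bool" where
  "bernoulli_dom N e c g \<longleftrightarrow>
     (\<forall>K. compact K \<and> K \<subseteq> {0<..} \<longrightarrow>
        abs_unif_conv K (mps_index N) (\<lambda>i t. c i * mdiff N e i g t))"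

definition bernoulli_op :: "nat \<Rightarrow> (nat \<Rightarrow> nat) \<Rightarrow> ((nat \<Rightarrow> nat) \<Rightarrow> complex)
    \<Rightarrow> (real \<Rightarrow> complex) \<Rightarrow> real \<Rightarrow> complex" where
  "bernoulli_op N e c g t = (\<Sum>\<^sub>\<infinity>i\<in>mps_index N. c i * mdiff N e i g t)"

end

theory Submission
  imports Defs "HOL-Analysis.Analysis"
begin



lemma sbm_mult:
  fixes v \<phi> :: "real \<Rightarrow> complex"
  assumes "set_borel_measurable lborel {0<..} \<phi>" "continuous_on {0<..} v"
  shows "set_borel_measurable lborel {0<..} (\<lambda>u. v u * \<phi> u)"
proof -
  have 1: "(\<lambda>x. indicator {0<..} x *\<^sub>R v x) \<in> borel_measurable lborel"
    using borel_measurable_continuous_on_indicator[OF _ assms(2)] by simp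
  have 2: "(\<lambda>x. indicator {0<..} x *\<^sub>R \<phi> x) \<in> borel_measurable lborel"
    using assms(1) by (simp add: set_borel_measurable_def)
  have "(\<lambda>x. indicator {0<..} x *\<^sub>R (v x * \<phi> x)) = (\<lambda>x. (indicator {0<..} x *\<^sub>R v x) * (indicator {0<..} x *\<^sub>R \<phi> x))"
    by (auto simp: indicator_def)
  then show ?thesis unfolding set_borel_measurable_def by (simp only:) (rule borel_measurable_times[OF 1 2])
qed

lemma lap_integrable:
  fixes v \<phi> :: "real \<Rightarrow> complex"
  assumes phi: "laplace_dom \<phi>" and t: "t > 0" and v: "continuous_on {0<..} v"
    and B: "\<And>u. u > 0 \<Longrightarrow> norm (v u) \<le> B"
  shows "set_integrable lborel {0<..} (\<lambda>u. exp (- of_real (t * u)) * (v u * \<phi> u))"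
proof -
  have i: "set_integrable lborel {0<..} (\<lambda>u. exp (- of_real t * of_real u) * \<phi> u)"
    using phi t unfolding laplace_dom_def by auto
  have I1: "set_integrable lborel {0<..} (\<lambda>u. of_real B * (exp (- of_real t * of_real u) * \<phi> u))"
    using i by simp
  have M1: "set_borel_measurable lborel {0<..} (\<lambda>u. (exp (- of_real (t * u)) * v u) * \<phi> u)"
    by (rule sbm_mult) (use phi in \<open>auto simp: laplace_dom_def intro!: continuous_intros v\<close>)
  show ?thesis
  proof (rule set_integrable_bound[where f="\<lambda>u. of_real B * (exp (- of_real t * of_real u) * \<phi> u)"], goal_cases)
    case 1 then show ?case by (rule I1)
  next
    case 2 then show ?case using M1 by (simp add: mult.assoc)
  next
    case 3
    have "norm (exp (- of_real (t * u)) * (v u * \<phi> u)) \<le> norm (of_real B * (exp (- of_real t * of_real u) * \<phi> u))" if "u > 0" for u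
    proof -
      have "norm (exp (- of_real (t * u)) * (v u * \<phi> u)) = exp (- (t*u)) * norm (v u) * norm (\<phi> u)"
        by (simp add: norm_mult flip: of_real_minus)
      also have "\<dots> \<le> exp (- (t*u)) * B * norm (\<phi> u)"
        using B[OF that] by (intro mult_right_mono mult_left_mono) auto
      also have "\<dots> = norm (of_real B * (exp (- of_real t * of_real u) * \<phi> u))"
      proof -
        have "0 \<le> B" using B[OF that] norm_ge_zero[of "v u"] by linarith
        then show ?thesis by (simp add: norm_mult flip: of_real_minus of_real_mult)
      qed
      finally show ?thesis .
    qed
    then show ?case by (auto simp: mult.assoc)
  qed
qed




lemma sbm_subset:
  fixes g :: "real \<Rightarrow> complex"
  assumes "set_borel_measurable lborel {0<..} g"
  shows "set_borel_measurable lborel {0<..<R} g"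
proof -
  have 1: "(\<lambda>x. indicator {0<..} x *\<^sub>R g x) \<in> borel_measurable lborel"
    using assms by (simp add: set_borel_measurable_def)
  have "(\<lambda>x. indicator {0<..<R} x *\<^sub>R g x) = (\<lambda>x. indicator {..<R} x *\<^sub>R (indicator {0<..} x *\<^sub>R g x))"
    by (auto simp: indicator_def)
  moreover have "(\<lambda>x. indicator {..<R} x *\<^sub>R (indicator {0<..} x *\<^sub>R g x)) \<in> borel_measurable lborel"
    using 1 by measurable
  ultimately show ?thesis unfolding set_borel_measurable_def by simp
qed

lemma sib:
  fixes f g :: "real \<Rightarrow> complex"
  assumes "set_integrable lborel A f" "set_borel_measurable lborel A g"
    and "\<And>x. x \<in> A \<Longrightarrow> norm (g x) \<le> C * norm (f x)"
  shows "set_integrable lborel A g"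
proof (rule set_integrable_bound[where f="\<lambda>x. of_real C * f x"])
  show "set_integrable lborel A (\<lambda>x. complex_of_real C * f x)" using assms(1) by simp
  show "set_borel_measurable lborel A g" by fact
  have "norm (g x) \<le> norm (complex_of_real C * f x)" if "x \<in> A" for x
  proof -
    have "C * norm (f x) \<le> \<bar>C\<bar> * norm (f x)" by (intro mult_right_mono) auto
    then show ?thesis using assms(3)[OF that] by (simp add: norm_mult)
  qed
  then show "AE x in lborel. x \<in> A \<longrightarrow> norm (g x) \<le> norm (complex_of_real C * f x)" by auto
qed

lemma laplace_dom_mult_bounded:
  fixes v \<phi> :: "real \<Rightarrow> complex"
  assumes phi: "laplace_dom \<phi>" and v: "continuous_on {0<..} v"
    and B: "\<And>u. u > 0 \<Longrightarrow> norm (v u) \<le> B"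
  shows "laplace_dom (\<lambda>u. v u * \<phi> u)"
proof -
  have m: "set_borel_measurable lborel {0<..} \<phi>" using phi by (simp add: laplace_dom_def)
  have a: "set_borel_measurable lborel {0<..} (\<lambda>u. v u * \<phi> u)" by (rule sbm_mult[OF m v])
  have b: "set_integrable lborel {0<..<R} (\<lambda>u. v u * \<phi> u)" if "R > 0" for R
  proof (rule sib[where C=B])
    show "set_integrable lborel {0<..<R} \<phi>" using phi that by (simp add: laplace_dom_def)
    show "set_borel_measurable lborel {0<..<R} (\<lambda>u. v u * \<phi> u)" by (rule sbm_subset[OF a])
    show "norm (v x * \<phi> x) \<le> B * norm (\<phi> x)" if "x \<in> {0<..<R}" for x
      using B[of x] that by (auto simp: norm_mult intro!: mult_right_mono)
  qed
  have c: "set_integrable lborel {0<..} (\<lambda>u. exp (- s * of_real u) * (v u * \<phi> u))" if "Re s > 0" for s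
  proof (rule sib[where C=B])
    show "set_integrable lborel {0<..} (\<lambda>u. exp (- s * of_real u) * \<phi> u)"
      using phi that by (simp add: laplace_dom_def)
    have "set_borel_measurable lborel {0<..} (\<lambda>u. (exp (- s * of_real u) * v u) * \<phi> u)"
      by (rule sbm_mult[OF m]) (auto intro!: continuous_intros v)
    then show "set_borel_measurable lborel {0<..} (\<lambda>u. exp (- s * of_real u) * (v u * \<phi> u))"
      by (simp add: mult.assoc)
    show "norm (exp (- s * of_real u) * (v u * \<phi> u)) \<le> B * norm (exp (- s * of_real u) * \<phi> u)"
      if "u \<in> {0<..}" for u
      using B[of u] that by (auto simp: norm_mult intro!: mult_right_mono)
  qed
  show ?thesis using a b c unfolding laplace_dom_def by blast
qed

lemma laplace_dom_u:
  fixes \<phi> :: "real \<Rightarrow> complex"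
  assumes phi: "laplace_dom \<phi>"
  shows "laplace_dom (\<lambda>u. - of_real u * \<phi> u)"
proof -
  have m: "set_borel_measurable lborel {0<..} \<phi>" using phi by (simp add: laplace_dom_def)
  have a: "set_borel_measurable lborel {0<..} (\<lambda>u. - of_real u * \<phi> u)"
    by (rule sbm_mult[OF m]) (auto intro!: continuous_intros)
  have b: "set_integrable lborel {0<..<R} (\<lambda>u. - of_real u * \<phi> u)" if "R > 0" for R
  proof (rule sib[where C=R])
    show "set_integrable lborel {0<..<R} \<phi>" using phi that by (simp add: laplace_dom_def)
    show "set_borel_measurable lborel {0<..<R} (\<lambda>u. - of_real u * \<phi> u)" by (rule sbm_subset[OF a])
    show "norm (- of_real x * \<phi> x) \<le> R * norm (\<phi> x)" if "x \<in> {0<..<R}" for x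
      using that by (auto simp: norm_mult intro!: mult_right_mono)
  qed
  have c: "set_integrable lborel {0<..} (\<lambda>u. exp (- s * of_real u) * (- of_real u * \<phi> u))" if s: "Re s > 0" for s
  proof (rule sib[where C="2 / Re s"])
    have "Re (s/2) > 0" using that by simp
    then show "set_integrable lborel {0<..} (\<lambda>u. exp (- (s/2) * of_real u) * \<phi> u)"
      using phi unfolding laplace_dom_def by blast
    have "set_borel_measurable lborel {0<..} (\<lambda>u. (exp (- s * of_real u) * - of_real u) * \<phi> u)"
      by (rule sbm_mult[OF m]) (auto intro!: continuous_intros)
    then show "set_borel_measurable lborel {0<..} (\<lambda>u. exp (- s * of_real u) * (- of_real u * \<phi> u))"
      by (simp add: mult.assoc)
    show "norm (exp (- s * of_real u) * (- of_real u * \<phi> u)) \<le> 2 / Re s * norm (exp (- (s/2) * of_real u) * \<phi> u)"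
      if "u \<in> {0<..}" for u
    proof -
      define \<sigma> where "\<sigma> = Re s"
      have u: "u > 0" using that by simp
      have sp: "\<sigma> > 0" using s by (simp add: \<sigma>_def)
      have "\<sigma> * u / 2 \<le> exp (\<sigma> * u / 2)" using exp_ge_add_one_self[of "\<sigma> * u / 2"] by linarith
      then have "u \<le> 2 / \<sigma> * exp (\<sigma> * u / 2)" using sp by (simp add: field_simps)
      then have "u * exp (- (\<sigma> * u)) \<le> 2 / \<sigma> * exp (\<sigma> * u / 2) * exp (- (\<sigma> * u))"
        by (intro mult_right_mono) auto
      also have "\<dots> = 2 / \<sigma> * exp (- (\<sigma> * u / 2))"
        by (simp add: mult.assoc flip: exp_add)
      finally have ineq: "u * exp (- (\<sigma> * u)) \<le> 2 / \<sigma> * exp (- (\<sigma> * u / 2))" .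
      have "norm (exp (- s * of_real u) * (- of_real u * \<phi> u)) = u * exp (- (\<sigma> * u)) * norm (\<phi> u)"
        using u by (simp add: norm_mult \<sigma>_def)
      also have "\<dots> \<le> 2 / \<sigma> * exp (- (\<sigma> * u / 2)) * norm (\<phi> u)"
        by (intro mult_right_mono ineq) auto
      also have "\<dots> = 2 / Re s * norm (exp (- (s/2) * of_real u) * \<phi> u)"
        by (simp add: norm_mult \<sigma>_def)
      finally show ?thesis .
    qed
  qed
  show ?thesis using a b c unfolding laplace_dom_def by blast
qed




lemma fdiff_laplace:
  fixes v \<phi> g :: "real \<Rightarrow> complex"
  assumes phi: "laplace_dom \<phi>" and h: "h \<ge> 0" and v: "continuous_on {0<..} v"
    and B: "\<And>u. u > 0 \<Longrightarrow> norm (v u) \<le> B"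
    and g: "\<And>t. t > 0 \<Longrightarrow> g t = laplace (\<lambda>u. v u * \<phi> u) t"
    and t: "t > 0"
  shows "fdiff h g t = laplace (\<lambda>u. ((of_real (exp (- h * u)) - 1) * v u) * \<phi> u) t"
proof -
  have i1: "set_integrable lborel {0<..} (\<lambda>u. exp (- of_real ((t + h) * u)) * (v u * \<phi> u))"
    by (rule lap_integrable[OF phi _ v B]) (use t h in auto)
  have i2: "set_integrable lborel {0<..} (\<lambda>u. exp (- of_real (t * u)) * (v u * \<phi> u))"
    by (rule lap_integrable[OF phi t v B])
  have "fdiff h g t = g (t + h) - g t" by (simp add: fdiff_def)
  also have "\<dots> = laplace (\<lambda>u. v u * \<phi> u) (t + h) - laplace (\<lambda>u. v u * \<phi> u) t"
    using t h by (simp add: g)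
  also have "\<dots> = (LBINT u:{0<..}. exp (- of_real ((t + h) * u)) * (v u * \<phi> u) - exp (- of_real (t * u)) * (v u * \<phi> u))"
    unfolding laplace_def by (rule set_integral_diff(2)[OF i1 i2, symmetric])
  also have "\<dots> = laplace (\<lambda>u. ((of_real (exp (- h * u)) - 1) * v u) * \<phi> u) t"
    unfolding laplace_def
  proof (rule set_lebesgue_integral_cong)
    show "\<forall>x. x \<in> {0<..} \<longrightarrow> exp (- of_real ((t + h) * x)) * (v x * \<phi> x) - exp (- of_real (t * x)) * (v x * \<phi> x) =
      exp (- of_real (t * x)) * ((of_real (exp (- h * x)) - 1) * v x * \<phi> x)"
    proof (intro allI impI)
      fix x :: real
      have e: "- of_real ((t + h) * x) = - of_real (t * x) + (of_real (- h * x) :: complex)"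
        by (simp add: algebra_simps)
      have "exp (- of_real ((t + h) * x)) = exp (- of_real (t * x)) * (of_real (exp (- h * x)) :: complex)"
        by (simp only: e exp_add exp_of_real)
      then show "exp (- of_real ((t + h) * x)) * (v x * \<phi> x) - exp (- of_real (t * x)) * (v x * \<phi> x) =
      exp (- of_real (t * x)) * ((of_real (exp (- h * x)) - 1) * v x * \<phi> x)"
        by (simp add: algebra_simps)
    qed
  qed simp
  finally show ?thesis .
qed

lemma expm1_bound:
  assumes "h \<ge> 0" "u > 0"
  shows "norm (of_real (exp (- h * u)) - 1 :: complex) \<le> 1"
proof -
  have "0 < exp (- h * u)" "exp (- h * u) \<le> 1" using assms by (auto simp: mult_nonneg_nonneg)
  then have "norm (of_real (exp (- h * u)) - 1 :: complex) = 1 - exp (- h * u)"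
  proof -
    have "(of_real (exp (- h * u)) - 1 :: complex) = of_real (exp (- h * u) - 1)" by simp
    then show ?thesis using \<open>exp (- h * u) \<le> 1\<close> by (simp only: norm_of_real)
  qed
  then show ?thesis using \<open>0 < exp (- h * u)\<close> by simp
qed

lemma fdiff_pow_laplace:
  fixes v \<phi> g :: "real \<Rightarrow> complex"
  assumes phi: "laplace_dom \<phi>" and h: "h \<ge> 0" and v: "continuous_on {0<..} v"
    and B: "\<And>u. u > 0 \<Longrightarrow> norm (v u) \<le> B"
    and g: "\<And>t. t > 0 \<Longrightarrow> g t = laplace (\<lambda>u. v u * \<phi> u) t"
  shows "\<forall>t>0. (fdiff h ^^ k) g t = laplace (\<lambda>u. ((of_real (exp (- h * u)) - 1) ^ k * v u) * \<phi> u) t"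
proof (induction k)
  case 0
  then show ?case using g by simp
next
  case (Suc k)
  have c: "continuous_on {0<..} (\<lambda>u. (of_real (exp (- h * u)) - 1) ^ k * v u)"
    by (auto intro!: continuous_intros v)
  have b: "norm ((of_real (exp (- h * u)) - 1) ^ k * v u) \<le> B" if "u > 0" for u
  proof -
    have "norm ((of_real (exp (- h * u)) - 1 :: complex) ^ k) \<le> 1"
      using expm1_bound[OF h that] by (simp add: norm_power power_le_one)
    then have "norm ((of_real (exp (- h * u)) - 1) ^ k * v u) \<le> 1 * norm (v u)"
      unfolding norm_mult by (intro mult_right_mono) auto
    then show ?thesis using B[OF that] by simp
  qed
  show ?case
  proof (intro allI impI)
    fix t :: real assume t: "t > 0"
    have "(fdiff h ^^ Suc k) g t = fdiff h ((fdiff h ^^ k) g) t" by simp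
    also have "\<dots> = laplace (\<lambda>u. ((of_real (exp (- h * u)) - 1) * ((of_real (exp (- h * u)) - 1) ^ k * v u)) * \<phi> u) t"
      by (rule fdiff_laplace[OF phi h c b]) (use Suc t in auto)
    also have "\<dots> = laplace (\<lambda>u. ((of_real (exp (- h * u)) - 1) ^ Suc k * v u) * \<phi> u) t"
      by (simp add: mult.assoc)
    finally show "(fdiff h ^^ Suc k) g t = laplace (\<lambda>u. ((of_real (exp (- h * u)) - 1) ^ Suc k * v u) * \<phi> u) t" .
  qed
qed

lemma mdiff_laplace:
  fixes \<phi> :: "real \<Rightarrow> complex"
  assumes phi: "laplace_dom \<phi>"
  shows "\<forall>t>0. mdiff n e i (laplace \<phi>) t = laplace (\<lambda>u. (\<Prod>j<n. (of_real (exp (- real (e j) * u)) - 1) ^ i j) * \<phi> u) t"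
proof (induction n)
  case 0
  then show ?case by simp
next
  case (Suc n)
  let ?P = "\<lambda>u. (\<Prod>j<n. (of_real (exp (- real (e j) * u)) - 1 :: complex) ^ i j)"
  have c: "continuous_on {0<..} ?P" by (auto intro!: continuous_intros)
  have b: "norm (?P u) \<le> 1" if "u > 0" for u
    unfolding prod_norm[symmetric] norm_power
  proof (rule prod_le_1)
    fix j assume "j \<in> {..<n}"
    have "norm (of_real (exp (- real (e j) * u)) - 1 :: complex) \<le> 1"
      by (rule expm1_bound[OF _ that]) simp
    then show "0 \<le> norm (of_real (exp (- real (e j) * u)) - 1 :: complex) ^ i j \<and>
          norm (of_real (exp (- real (e j) * u)) - 1 :: complex) ^ i j \<le> 1"
      by (simp add: power_le_one)
  qed
  have "\<forall>t>0. (fdiff (real (e n)) ^^ i n) (mdiff n e i (laplace \<phi>)) t =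
     laplace (\<lambda>u. ((of_real (exp (- real (e n) * u)) - 1) ^ i n * ?P u) * \<phi> u) t"
    by (rule fdiff_pow_laplace[OF phi _ c b]) (use Suc in auto)
  then show ?case by (simp add: ac_simps)
qed




lemma set_integral_sum':
  fixes f :: "'i \<Rightarrow> real \<Rightarrow> 'b::{banach, second_countable_topology}"
  assumes "finite G" "\<And>i. i \<in> G \<Longrightarrow> set_integrable M A (f i)"
  shows "set_integrable M A (\<lambda>x. \<Sum>i\<in>G. f i x)"
    and "(LINT x:A|M. (\<Sum>i\<in>G. f i x)) = (\<Sum>i\<in>G. LINT x:A|M. f i x)"
proof -
  have i: "integrable M (\<lambda>x. indicator A x *\<^sub>R f i x)" if "i \<in> G" for i
    using assms(2)[OF that] by (simp add: set_integrable_def)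
  show "set_integrable M A (\<lambda>x. \<Sum>i\<in>G. f i x)"
    unfolding set_integrable_def scaleR_sum_right using i by auto
  show "(LINT x:A|M. (\<Sum>i\<in>G. f i x)) = (\<Sum>i\<in>G. LINT x:A|M. f i x)"
    unfolding set_lebesgue_integral_def scaleR_sum_right using i by (simp add: integral_sum)
qed

locale lapser =
  fixes \<phi> :: "real \<Rightarrow> complex" and t0 :: real and I :: "'i set" and w :: "'i \<Rightarrow> real \<Rightarrow> complex"
  assumes phi: "laplace_dom \<phi>" and t0: "t0 > 0"
    and wc: "\<And>i. i \<in> I \<Longrightarrow> continuous_on {0<..} (w i)"
    and wb: "\<And>i. i \<in> I \<Longrightarrow> \<exists>B. \<forall>u>0. norm (w i u) \<le> B"
begin

definition L where "L i t = laplace (\<lambda>u. w i u * \<phi> u) t"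

lemma intg: "i \<in> I \<Longrightarrow> t > 0 \<Longrightarrow> set_integrable lborel {0<..} (\<lambda>u. exp (- of_real (t * u)) * (w i u * \<phi> u))"
  using wb[of i] lap_integrable[OF phi _ wc] by blast

lemma est:
  assumes t: "t \<ge> t0" and G: "finite G" "G \<subseteq> I"
    and Dint: "set_integrable lborel {0<..} (\<lambda>u. exp (- (t0 * u)) * norm (\<phi> u) * D u)"
    and Db: "\<And>u. u > 0 \<Longrightarrow> (\<Sum>i\<in>G. norm (w i u)) \<le> D u"
  shows "(\<Sum>i\<in>G. norm (L i t)) \<le> (LBINT u:{0<..}. exp (- (t0 * u)) * norm (\<phi> u) * D u)"
proof -
  have tp: "t > 0" using t t0 by simp
  have ii: "set_integrable lborel {0<..} (\<lambda>u. norm (exp (- of_real (t * u)) * (w i u * \<phi> u)))" if "i \<in> G" for i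
    using set_integrable_norm[OF intg[OF _ tp]] that G by auto
  have "(\<Sum>i\<in>G. norm (L i t)) \<le> (\<Sum>i\<in>G. LBINT u:{0<..}. norm (exp (- of_real (t * u)) * (w i u * \<phi> u)))"
    unfolding L_def laplace_def
    by (intro sum_mono set_integral_norm_bound intg tp) (use G in auto)
  also have "\<dots> = (LBINT u:{0<..}. (\<Sum>i\<in>G. norm (exp (- of_real (t * u)) * (w i u * \<phi> u))))"
    by (rule set_integral_sum'(2)[symmetric]) (use G ii in auto)
  also have "\<dots> \<le> (LBINT u:{0<..}. exp (- (t0 * u)) * norm (\<phi> u) * D u)"
  proof (rule set_integral_mono)
    show "set_integrable lborel {0<..} (\<lambda>u. \<Sum>i\<in>G. norm (exp (- of_real (t * u)) * (w i u * \<phi> u)))"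
      by (rule set_integral_sum'(1)) (use G ii in auto)
    show "set_integrable lborel {0<..} (\<lambda>u. exp (- (t0 * u)) * norm (\<phi> u) * D u)" by fact
    fix u :: real assume u: "u \<in> {0<..}"
    have "0 \<le> (\<Sum>i\<in>G. norm (w i u))" by (intro sum_nonneg) simp
    moreover have "(\<Sum>i\<in>G. norm (w i u)) \<le> D u" using Db[of u] u by simp
    ultimately have D0: "0 \<le> D u" by linarith
    have "norm (exp (- of_real (t * u)) * (w i u * (\<phi> u::complex))) = exp (- (t * u)) * norm (\<phi> u) * norm (w i u)" for i
      by (simp add: norm_mult flip: of_real_minus)
    then have "(\<Sum>i\<in>G. norm (exp (- of_real (t * u)) * (w i u * \<phi> u))) = exp (- (t * u)) * norm (\<phi> u) * (\<Sum>i\<in>G. norm (w i u))"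
      by (simp add: sum_distrib_left)
    also have "\<dots> \<le> exp (- (t * u)) * norm (\<phi> u) * D u"
      by (intro mult_left_mono Db) (use u in auto)
    also have "\<dots> \<le> exp (- (t0 * u)) * norm (\<phi> u) * D u"
      using t u D0 by (intro mult_right_mono) (auto intro!: mult_right_mono)
    finally show "(\<Sum>i\<in>G. norm (exp (- of_real (t * u)) * (w i u * \<phi> u))) \<le> exp (- (t0 * u)) * norm (\<phi> u) * D u" .
  qed
  finally show ?thesis .
qed

end




context lapser begin

definition ok where "ok F D \<epsilon> \<longleftrightarrow> finite F \<and> F \<subseteq> I \<and>
   set_integrable lborel {0<..} (\<lambda>u. exp (- (t0 * u)) * norm (\<phi> u) * D u) \<and>
   (LBINT u:{0<..}. exp (- (t0 * u)) * norm (\<phi> u) * D u) < \<epsilon> \<and>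
   (\<forall>u>0. \<forall>G. finite G \<and> G \<subseteq> I - F \<longrightarrow> (\<Sum>i\<in>G. norm (w i u)) \<le> D u)"

lemma unif:
  assumes tail: "\<And>\<epsilon>. \<epsilon> > 0 \<Longrightarrow> \<exists>F D. ok F D \<epsilon>"
  shows "abs_unif_conv {t0..} I L"
proof -
  obtain F1 D1 where ok1: "ok F1 D1 1" using tail[of 1] by auto
  have summ: "(\<lambda>i. norm (L i t)) summable_on I" if t: "t \<ge> t0" for t
  proof (rule nonneg_bdd_above_summable_on)
    show "bdd_above (sum (\<lambda>i. norm (L i t)) ` {G. G \<subseteq> I \<and> finite G})"
    proof (rule bdd_aboveI2)
      fix G assume G: "G \<in> {G. G \<subseteq> I \<and> finite G}"
      have "sum (\<lambda>i. norm (L i t)) G = sum (\<lambda>i. norm (L i t)) (G \<inter> F1) + sum (\<lambda>i. norm (L i t)) (G - F1)"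
        using G by (simp add: sum.Int_Diff)
      also have "sum (\<lambda>i. norm (L i t)) (G \<inter> F1) \<le> sum (\<lambda>i. norm (L i t)) F1"
        using ok1 by (intro sum_mono2) (auto simp: ok_def)
      also have "sum (\<lambda>i. norm (L i t)) (G - F1) \<le> (LBINT u:{0<..}. exp (- (t0 * u)) * norm (\<phi> u) * D1 u)"
      proof (rule est[OF t])
        show "finite (G - F1)" "G - F1 \<subseteq> I" using G by auto
        show "set_integrable lborel {0<..} (\<lambda>u. exp (- (t0 * u)) * norm (\<phi> u) * D1 u)" using ok1 by (simp add: ok_def)
        fix u :: real assume "u > 0"
        moreover have "G - F1 \<subseteq> I - F1" "finite (G - F1)" using G by auto
        ultimately show "(\<Sum>i\<in>G - F1. norm (w i u)) \<le> D1 u" using ok1 unfolding ok_def by blast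
      qed
      finally show "sum (\<lambda>i. norm (L i t)) G \<le> sum (\<lambda>i. norm (L i t)) F1 + (LBINT u:{0<..}. exp (- (t0 * u)) * norm (\<phi> u) * D1 u)"
        by simp
    qed
  qed simp
  show ?thesis unfolding abs_unif_conv_def
  proof (intro conjI ballI allI impI)
    fix t assume "t \<in> {t0..}" then show "(\<lambda>i. norm (L i t)) summable_on I" using summ by simp
  next
    fix \<epsilon> :: real assume "\<epsilon> > 0"
    then obtain F D where ok: "ok F D \<epsilon>" using tail by blast
    show "\<exists>F. finite F \<and> F \<subseteq> I \<and> (\<forall>t\<in>{t0..}. (\<Sum>\<^sub>\<infinity>i\<in>I - F. norm (L i t)) < \<epsilon>)"
    proof (intro exI conjI ballI)
      show "finite F" "F \<subseteq> I" using ok by (auto simp: ok_def)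
      fix t assume t: "t \<in> {t0..}"
      have "(\<Sum>\<^sub>\<infinity>i\<in>I - F. norm (L i t)) \<le> (LBINT u:{0<..}. exp (- (t0 * u)) * norm (\<phi> u) * D u)"
      proof (rule infsum_le_finite_sums)
        show "(\<lambda>i. norm (L i t)) summable_on I - F"
          by (rule summable_on_subset_banach[OF summ]) (use t in auto)
        fix G assume "finite G" "G \<subseteq> I - F"
        then show "(\<Sum>i\<in>G. norm (L i t)) \<le> (LBINT u:{0<..}. exp (- (t0 * u)) * norm (\<phi> u) * D u)"
          using ok t by (intro est) (auto simp: ok_def)
      qed
      also have "\<dots> < \<epsilon>" using ok by (simp add: ok_def)
      finally show "(\<Sum>\<^sub>\<infinity>i\<in>I - F. norm (L i t)) < \<epsilon>" .
    qed
  qed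
qed

lemma kp:
  assumes ok: "ok F D \<epsilon>" and u: "u > 0" and Y: "finite Y" "F \<subseteq> Y" "Y \<subseteq> I"
    and hs: "((\<lambda>i. w i u) has_sum W) I"
  shows "norm ((\<Sum>i\<in>Y. w i u) - W) \<le> D u"
proof -
  have hsd: "((\<lambda>i. w i u) has_sum (W - (\<Sum>i\<in>Y. w i u))) (I - Y)"
    by (rule has_sum_Diff[OF hs has_sum_finite[OF Y(1)] Y(3)])
  have bnd: "(\<Sum>i\<in>G. norm (w i u)) \<le> D u" if "finite G" "G \<subseteq> I - Y" for G
  proof -
    have "G \<subseteq> I - F" using that Y by blast
    then show ?thesis using ok u that unfolding ok_def by blast
  qed
  have as: "(\<lambda>i. norm (w i u)) summable_on (I - Y)"
  proof (rule nonneg_bdd_above_summable_on)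
    show "bdd_above (sum (\<lambda>i. norm (w i u)) ` {G. G \<subseteq> I - Y \<and> finite G})"
      using bnd by (intro bdd_aboveI2) auto
  qed simp
  have "norm ((\<Sum>i\<in>Y. w i u) - W) = norm (W - (\<Sum>i\<in>Y. w i u))" by (rule norm_minus_commute)
  also have "\<dots> = norm (\<Sum>\<^sub>\<infinity>i\<in>I - Y. w i u)" using infsumI[OF hsd] by simp
  also have "\<dots> \<le> (\<Sum>\<^sub>\<infinity>i\<in>I - Y. norm (w i u))" by (rule norm_infsum_bound[OF as])
  also have "\<dots> \<le> D u" by (rule infsum_le_finite_sums[OF as bnd])
  finally show ?thesis .
qed

lemma hasum:
  assumes tail: "\<And>\<epsilon>. \<epsilon> > 0 \<Longrightarrow> \<exists>F D. ok F D \<epsilon>"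
    and WL: "laplace_dom (\<lambda>u. W u * \<phi> u)"
    and Wsum: "\<And>u. u > 0 \<Longrightarrow> ((\<lambda>i. w i u) has_sum W u) I"
    and t: "t \<ge> t0"
  shows "((\<lambda>i. L i t) has_sum laplace (\<lambda>u. W u * \<phi> u) t) I"
  unfolding has_sum_def tendsto_iff eventually_finite_subsets_at_top
proof (intro allI impI)
  fix \<epsilon> :: real assume "\<epsilon> > 0"
  then obtain F D where ok: "ok F D \<epsilon>" using tail by blast
  have tp: "t > 0" using t t0 by simp
  have iW: "set_integrable lborel {0<..} (\<lambda>u. exp (- of_real (t * u)) * (W u * \<phi> u))"
  proof -
    have "set_integrable lborel {0<..} (\<lambda>u. exp (- of_real t * of_real u) * (W u * \<phi> u))"
      using WL tp unfolding laplace_dom_def by auto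
    then show ?thesis by simp
  qed
  show "\<exists>X. finite X \<and> X \<subseteq> I \<and> (\<forall>Y. finite Y \<and> X \<subseteq> Y \<and> Y \<subseteq> I \<longrightarrow> dist (sum (\<lambda>i. L i t) Y) (laplace (\<lambda>u. W u * \<phi> u) t) < \<epsilon>)"
  proof (intro exI conjI allI impI)
    show "finite F" "F \<subseteq> I" using ok by (auto simp: ok_def)
    fix Y assume Y: "finite Y \<and> F \<subseteq> Y \<and> Y \<subseteq> I"
    have iY: "set_integrable lborel {0<..} (\<lambda>u. \<Sum>i\<in>Y. exp (- of_real (t * u)) * (w i u * \<phi> u))"
      by (rule set_integral_sum'(1)) (use Y intg tp in auto)
    have "sum (\<lambda>i. L i t) Y = (LBINT u:{0<..}. \<Sum>i\<in>Y. exp (- of_real (t * u)) * (w i u * \<phi> u))"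
      unfolding L_def laplace_def by (rule set_integral_sum'(2)[symmetric]) (use Y intg tp in auto)
    then have "sum (\<lambda>i. L i t) Y - laplace (\<lambda>u. W u * \<phi> u) t =
       (LBINT u:{0<..}. (\<Sum>i\<in>Y. exp (- of_real (t * u)) * (w i u * \<phi> u)) - exp (- of_real (t * u)) * (W u * \<phi> u))"
      unfolding laplace_def using set_integral_diff(2)[OF iY iW] by simp
    also have "\<dots> = (LBINT u:{0<..}. exp (- of_real (t * u)) * (((\<Sum>i\<in>Y. w i u) - W u) * \<phi> u))"
      by (intro set_lebesgue_integral_cong) (auto simp: sum_distrib_left sum_distrib_right algebra_simps)
    finally have eq: "sum (\<lambda>i. L i t) Y - laplace (\<lambda>u. W u * \<phi> u) t =
        (LBINT u:{0<..}. exp (- of_real (t * u)) * (((\<Sum>i\<in>Y. w i u) - W u) * \<phi> u))" .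
    have iR: "set_integrable lborel {0<..} (\<lambda>u. exp (- of_real (t * u)) * (((\<Sum>i\<in>Y. w i u) - W u) * \<phi> u))"
    proof -
      have "set_integrable lborel {0<..} (\<lambda>u. (\<Sum>i\<in>Y. exp (- of_real (t * u)) * (w i u * \<phi> u)) - exp (- of_real (t * u)) * (W u * \<phi> u))"
        by (rule set_integral_diff(1)[OF iY iW])
      then show ?thesis
        by (rule set_integrable_cong[THEN iffD1, rotated 3]) (auto simp: sum_distrib_left sum_distrib_right algebra_simps)
    qed
    have "dist (sum (\<lambda>i. L i t) Y) (laplace (\<lambda>u. W u * \<phi> u) t) = norm (LBINT u:{0<..}. exp (- of_real (t * u)) * (((\<Sum>i\<in>Y. w i u) - W u) * \<phi> u))"
      by (simp add: dist_norm eq)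
    also have "\<dots> \<le> (LBINT u:{0<..}. norm (exp (- of_real (t * u)) * (((\<Sum>i\<in>Y. w i u) - W u) * \<phi> u)))"
      by (rule set_integral_norm_bound[OF iR])
    also have "\<dots> \<le> (LBINT u:{0<..}. exp (- (t0 * u)) * norm (\<phi> u) * D u)"
    proof (rule set_integral_mono)
      show "set_integrable lborel {0<..} (\<lambda>u. norm (exp (- of_real (t * u)) * (((\<Sum>i\<in>Y. w i u) - W u) * \<phi> u)))"
        by (rule set_integrable_norm[OF iR])
      show "set_integrable lborel {0<..} (\<lambda>u. exp (- (t0 * u)) * norm (\<phi> u) * D u)" using ok by (simp add: ok_def)
      fix u :: real assume u: "u \<in> {0<..}"
      have k: "norm ((\<Sum>i\<in>Y. w i u) - W u) \<le> D u" using kp[OF ok _ _ _ _ Wsum] u Y by auto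
      have "norm (exp (- of_real (t * u)) * (((\<Sum>i\<in>Y. w i u) - W u) * \<phi> u)) = exp (- (t * u)) * norm (\<phi> u) * norm ((\<Sum>i\<in>Y. w i u) - W u)"
        by (simp add: norm_mult flip: of_real_minus)
      also have "\<dots> \<le> exp (- (t * u)) * norm (\<phi> u) * D u"
        by (intro mult_left_mono k) auto
      also have "\<dots> \<le> exp (- (t0 * u)) * norm (\<phi> u) * D u"
      proof -
        have "0 \<le> D u" using k norm_ge_zero order_trans by blast
        then show ?thesis using t u by (intro mult_right_mono) (auto intro!: mult_right_mono)
      qed
      finally show "norm (exp (- of_real (t * u)) * (((\<Sum>i\<in>Y. w i u) - W u) * \<phi> u)) \<le> exp (- (t0 * u)) * norm (\<phi> u) * D u" .
    qed
    also have "\<dots> < \<epsilon>" using ok by (simp add: ok_def)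
    finally show "dist (sum (\<lambda>i. L i t) Y) (laplace (\<lambda>u. W u * \<phi> u) t) < \<epsilon>" .
  qed
qed

end




lemma taylor_exp: "\<bar>exp x - 1 - (x::real)\<bar> \<le> x\<^sup>2 / 2 * exp \<bar>x\<bar>"
proof -
  obtain s where s: "\<bar>s\<bar> \<le> \<bar>x\<bar>" "exp x = (\<Sum>m<2. (x ^ m) / fact m) + (exp s / fact 2) * x ^ 2"
    using Maclaurin_exp_le[of x 2] by blast
  have e1: "exp x - 1 - x = exp s / 2 * x\<^sup>2" using s(2) by (simp add: numeral_2_eq_2)
  have "exp s \<le> exp \<bar>x\<bar>" using s(1) by simp
  have nn: "exp s / 2 * x\<^sup>2 \<ge> 0" by simp
  have "\<bar>exp x - 1 - x\<bar> = exp s / 2 * x\<^sup>2" unfolding e1 using nn by (rule abs_of_nonneg)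
  also have "\<dots> \<le> exp \<bar>x\<bar> / 2 * x\<^sup>2"
    using \<open>exp s \<le> exp \<bar>x\<bar>\<close> by (intro mult_right_mono) auto
  also have "\<dots> = x\<^sup>2 / 2 * exp \<bar>x\<bar>" by simp
  finally show ?thesis .
qed

lemma lapdom_int:
  assumes "laplace_dom \<phi>" "t > 0"
  shows "set_integrable lborel {0<..} (\<lambda>u. exp (- of_real (t * u)) * \<phi> u)"
proof -
  have "set_integrable lborel {0<..} (\<lambda>u. exp (- of_real t * of_real u) * \<phi> u)"
    using assms unfolding laplace_dom_def by auto
  then show ?thesis by simp
qed

lemma u_bound:
  fixes t u :: real assumes t: "t > 0" and u: "u \<ge> 0"
  shows "u\<^sup>2 * exp (- (t * u / 2)) \<le> 64 / t\<^sup>2 * exp (- (t * u / 4))"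
proof -
  have "t * u / 8 \<le> exp (t * u / 8)" using exp_ge_add_one_self[of "t * u / 8"] by linarith
  then have u1: "u \<le> 8 / t * exp (t * u / 8)" using t by (simp add: field_simps)
  have "u\<^sup>2 \<le> (8 / t * exp (t * u / 8))\<^sup>2" using u u1 by (intro power_mono) auto
  also have "\<dots> = 64 / t\<^sup>2 * (exp (t * u / 8) * exp (t * u / 8))"
    by (simp add: power2_eq_square field_simps)
  also have "exp (t * u / 8) * exp (t * u / 8) = exp (t * u / 4)"
    by (simp flip: exp_add)
  finally have "u\<^sup>2 * exp (- (t * u / 2)) \<le> 64 / t\<^sup>2 * exp (t * u / 4) * exp (- (t * u / 2))"
    by (intro mult_right_mono) auto
  also have "\<dots> = 64 / t\<^sup>2 * exp (- (t * u / 4))"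
    by (simp add: mult.assoc flip: exp_add)
  finally show ?thesis .
qed

lemma laplace_deriv:
  fixes \<phi> :: "real \<Rightarrow> complex"
  assumes phi: "laplace_dom \<phi>" and t: "t > 0"
  shows "(laplace \<phi> has_vector_derivative laplace (\<lambda>u. - of_real u * \<phi> u) t) (at t)"
proof -
  define D where "D = laplace (\<lambda>u. - of_real u * \<phi> u) t"
  define \<Phi> where "\<Phi> = (LBINT u:{0<..}. exp (- (t / 4 * u)) * norm (\<phi> u))"
  define C where "C = 32 / t\<^sup>2 * \<Phi>"
  have iP: "set_integrable lborel {0<..} (\<lambda>u. exp (- (t / 4 * u)) * norm (\<phi> u))"
  proof -
    have "set_integrable lborel {0<..} (\<lambda>u. norm (exp (- of_real (t / 4 * u)) * \<phi> u))"
      by (rule set_integrable_norm[OF lapdom_int[OF phi]]) (use t in simp)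
    then show ?thesis by (simp add: norm_mult flip: of_real_minus)
  qed
  have key: "norm (laplace \<phi> (t + h) - laplace \<phi> t - h *\<^sub>R D) \<le> C * h\<^sup>2" if h: "\<bar>h\<bar> < t / 2" for h
  proof -
    have th: "t + h > 0" using h t by linarith
    note i1 = lapdom_int[OF phi th] and i2 = lapdom_int[OF phi t]
      and i3 = lapdom_int[OF laplace_dom_u[OF phi] t]
    define R where "R u = exp (- of_real (t * u)) * (of_real (exp (- h * u) - 1 + h * u) * \<phi> u)" for u
    have Req: "(\<lambda>u. exp (- of_real ((t + h) * u)) * \<phi> u - exp (- of_real (t * u)) * \<phi> u
        - of_real h * (exp (- of_real (t * u)) * (- of_real u * \<phi> u))) = R"
    proof
      fix u :: real
      have e: "- of_real ((t + h) * u) = - of_real (t * u) + (of_real (- h * u) :: complex)"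
        by (simp add: algebra_simps)
      have "exp (- of_real ((t + h) * u)) = exp (- of_real (t * u)) * (of_real (exp (- h * u)) :: complex)"
        by (simp only: e exp_add exp_of_real)
      then show "exp (- of_real ((t + h) * u)) * \<phi> u - exp (- of_real (t * u)) * \<phi> u
        - of_real h * (exp (- of_real (t * u)) * (- of_real u * \<phi> u)) = R u"
        unfolding R_def by (simp add: algebra_simps)
    qed
    have i12: "set_integrable lborel {0<..} (\<lambda>u. exp (- of_real ((t + h) * u)) * \<phi> u - exp (- of_real (t * u)) * \<phi> u)"
      by (rule set_integral_diff(1)[OF i1 i2])
    have i3': "set_integrable lborel {0<..} (\<lambda>u. of_real h * (exp (- of_real (t * u)) * (- of_real u * \<phi> u)))"
      by (rule set_integrable_mult_right[OF i3])
    have iR: "set_integrable lborel {0<..} R"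
      using set_integral_diff(1)[OF i12 i3'] unfolding Req .
    have "laplace \<phi> (t + h) - laplace \<phi> t - h *\<^sub>R D =
      (LBINT u:{0<..}. exp (- of_real ((t + h) * u)) * \<phi> u - exp (- of_real (t * u)) * \<phi> u)
       - (LBINT u:{0<..}. of_real h * (exp (- of_real (t * u)) * (- of_real u * \<phi> u)))"
      unfolding laplace_def D_def set_integral_diff(2)[OF i1 i2] set_integral_mult_right scaleR_conv_of_real ..
    also have "\<dots> = (LBINT u:{0<..}. R u)"
      unfolding set_integral_diff(2)[OF i12 i3', symmetric] Req ..
    finally have eq: "laplace \<phi> (t + h) - laplace \<phi> t - h *\<^sub>R D = (LBINT u:{0<..}. R u)" .
    have "norm (LBINT u:{0<..}. R u) \<le> (LBINT u:{0<..}. norm (R u))"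
      by (rule set_integral_norm_bound[OF iR])
    also have "\<dots> \<le> (LBINT u:{0<..}. (32 / t\<^sup>2 * h\<^sup>2) * (exp (- (t / 4 * u)) * norm (\<phi> u)))"
    proof (rule set_integral_mono)
      show "set_integrable lborel {0<..} (\<lambda>u. norm (R u))" by (rule set_integrable_norm[OF iR])
      show "set_integrable lborel {0<..} (\<lambda>u. (32 / t\<^sup>2 * h\<^sup>2) * (exp (- (t / 4 * u)) * norm (\<phi> u)))"
        using iP by simp
      fix u :: real assume "u \<in> {0<..}"
      then have u: "u > 0" by simp
      have nR: "norm (R u) = exp (- (t * u)) * \<bar>exp (- h * u) - 1 + h * u\<bar> * norm (\<phi> u)"
        unfolding R_def norm_mult norm_of_real by (simp add: norm_exp_eq_Re)
      have tay: "\<bar>exp (- h * u) - 1 + h * u\<bar> \<le> (h * u)\<^sup>2 / 2 * exp (\<bar>h\<bar> * u)"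
        using taylor_exp[of "- h * u"] u by (simp add: abs_mult power2_eq_square)
      have ee: "exp (- (t * u)) * exp (\<bar>h\<bar> * u) \<le> exp (- (t * u / 2))"
      proof -
        have "- (t * u) + \<bar>h\<bar> * u \<le> - (t * u / 2)"
          using h u by (simp add: algebra_simps)
        then show ?thesis by (simp flip: exp_add)
      qed
      have ub: "u\<^sup>2 * exp (- (t * u / 2)) \<le> 64 / t\<^sup>2 * exp (- (t * u / 4))"
        by (rule u_bound) (use t u in auto)
      have "norm (R u) \<le> exp (- (t * u)) * ((h * u)\<^sup>2 / 2 * exp (\<bar>h\<bar> * u)) * norm (\<phi> u)"
        unfolding nR by (intro mult_right_mono mult_left_mono tay) auto
      also have "\<dots> = h\<^sup>2 / 2 * u\<^sup>2 * (exp (- (t * u)) * exp (\<bar>h\<bar> * u)) * norm (\<phi> u)"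
        by (simp add: power_mult_distrib)
      also have "\<dots> \<le> h\<^sup>2 / 2 * u\<^sup>2 * exp (- (t * u / 2)) * norm (\<phi> u)"
        by (intro mult_right_mono mult_left_mono ee) auto
      also have "\<dots> = h\<^sup>2 / 2 * (u\<^sup>2 * exp (- (t * u / 2))) * norm (\<phi> u)" by simp
      also have "\<dots> \<le> h\<^sup>2 / 2 * (64 / t\<^sup>2 * exp (- (t * u / 4))) * norm (\<phi> u)"
        by (intro mult_right_mono mult_left_mono ub) auto
      also have "\<dots> = (32 / t\<^sup>2 * h\<^sup>2) * (exp (- (t / 4 * u)) * norm (\<phi> u))"
        by (simp add: field_simps)
      finally show "norm (R u) \<le> (32 / t\<^sup>2 * h\<^sup>2) * (exp (- (t / 4 * u)) * norm (\<phi> u))" .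
    qed
    also have "\<dots> = C * h\<^sup>2" by (simp add: C_def \<Phi>_def)
    finally show ?thesis unfolding eq .
  qed
  have C0: "C \<ge> 0"
  proof -
    have "\<Phi> \<ge> 0" unfolding \<Phi>_def set_lebesgue_integral_def
      by (rule Bochner_Integration.integral_nonneg) (auto simp: indicator_def)
    then show ?thesis by (simp add: C_def)
  qed
  show ?thesis
    unfolding has_vector_derivative_def has_derivative_at'
  proof (intro conjI allI impI)
    show "bounded_linear (\<lambda>x. x *\<^sub>R laplace (\<lambda>u. - of_real u * \<phi> u) t)"
      by (rule bounded_linear_scaleR_left)
    fix e :: real assume e: "e > 0"
    show "\<exists>d>0. \<forall>x'. 0 < norm (x' - t) \<and> norm (x' - t) < d \<longrightarrow>
      norm (laplace \<phi> x' - laplace \<phi> t - (x' - t) *\<^sub>R laplace (\<lambda>u. - of_real u * \<phi> u) t) / norm (x' - t) < e"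
    proof (intro exI conjI allI impI)
      show "min (t / 2) (e / (C + 1)) > 0" using t e C0 by simp
      fix x' assume x': "0 < norm (x' - t) \<and> norm (x' - t) < min (t / 2) (e / (C + 1))"
      define h where "h = x' - t"
      have h0: "\<bar>h\<bar> > 0" "\<bar>h\<bar> < t / 2" "\<bar>h\<bar> < e / (C + 1)" using x' by (auto simp: h_def)
      have x'eq: "x' = t + h" by (simp add: h_def)
      have n1: "norm (laplace \<phi> x' - laplace \<phi> t - (x' - t) *\<^sub>R D) \<le> C * h\<^sup>2"
        using key[OF h0(2)] unfolding x'eq by simp
      have nx: "norm (x' - t) = \<bar>h\<bar>" by (simp add: h_def)
      have "norm (laplace \<phi> x' - laplace \<phi> t - (x' - t) *\<^sub>R D) / norm (x' - t) \<le> C * h\<^sup>2 / \<bar>h\<bar>"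
        unfolding nx by (rule divide_right_mono[OF n1]) simp
      also have "\<dots> = C * \<bar>h\<bar>"
      proof -
        have hh: "h\<^sup>2 = \<bar>h\<bar> * \<bar>h\<bar>" by (simp add: power2_eq_square)
        show ?thesis using h0(1) by (cases "h > 0") (auto simp: power2_eq_square field_simps)
      qed
      also have "\<dots> \<le> C * (e / (C + 1))" using h0 C0 by (intro mult_left_mono) auto
      also have "\<dots> < e"
      proof -
        have "C * (e / (C + 1)) = e * (C / (C + 1))" by simp
        also have "\<dots> < e * 1" using C0 e by (intro mult_strict_left_mono) auto
        finally show ?thesis by simp
      qed
      finally show "norm (laplace \<phi> x' - laplace \<phi> t - (x' - t) *\<^sub>R laplace (\<lambda>u. - of_real u * \<phi> u) t) / norm (x' - t) < e"
        by (simp add: D_def)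
    qed
  qed
qed




definition lw :: "nat \<Rightarrow> real \<Rightarrow> complex" where
  "lw k u = (-1) ^ (k + 1) / of_nat k * (of_real (exp (- u)) - 1) ^ k"
definition lg :: "nat \<Rightarrow> real \<Rightarrow> real" where
  "lg n u = (1 - exp (- u)) ^ Suc n / real (Suc n)"

lemma lw_Suc: "lw (Suc n) u = - of_real (lg n u)"
proof -
  have a: "(of_real (exp (- u)) - 1 :: complex) = - of_real (1 - exp (- u))" by simp
  have "lw (Suc n) u = (-1) ^ (Suc n + 1) * (-1) ^ Suc n / of_nat (Suc n) * of_real (1 - exp (- u)) ^ Suc n"
    unfolding lw_def a power_minus[of "of_real (1 - exp (- u)) :: complex"] by simp
  also have "(-1) ^ (Suc n + 1) * (-1) ^ Suc n = (-1 :: complex)"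
    by (simp flip: power_add)
  finally show ?thesis by (simp add: lg_def)
qed

lemma lg_nonneg: "u > 0 \<Longrightarrow> 0 \<le> lg n u"
  by (simp add: lg_def)

lemma lw_norm: "u > 0 \<Longrightarrow> norm (lw (Suc n) u) = lg n u"
  using lg_nonneg[of u n] by (simp add: lw_Suc)

lemma lg_sums:
  assumes u: "u > 0" shows "(\<lambda>n. lg n u) sums u"
proof -
  define x where "x = exp (- u)"
  have x: "0 < x" "x < 1" using u by (auto simp: x_def)
  have summ: "summable (\<lambda>n. lg n u)"
  proof (rule summable_comparison_test')
    show "summable (\<lambda>n. (1 - x) ^ n)" using x by (intro summable_geometric) auto
    fix n :: nat
    have "norm (lg n u) = (1 - x) ^ Suc n / real (Suc n)" using x by (simp add: lg_def x_def)
    also have "\<dots> \<le> (1 - x) ^ Suc n" using x by (simp add: divide_le_eq)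
    also have "\<dots> \<le> (1 - x) ^ n" using x by (intro power_decreasing) auto
    finally show "norm (lg n u) \<le> (1 - x) ^ n" .
  qed
  have "ln x = (\<Sum>n. (-1)^n * (1 / real (n + 1)) * (x - 1)^(Suc n))"
    by (rule ln_series) (use x in auto)
  also have "(\<lambda>n. (-1)^n * (1 / real (n + 1)) * (x - 1)^(Suc n)) = (\<lambda>n. - lg n u)"
  proof
    fix n
    have p: "(x - 1) ^ Suc n = (-1) ^ Suc n * (1 - x) ^ Suc n"
      by (subst power_minus[symmetric]) simp
    have m: "(-1) ^ n * (-1) ^ Suc n = (-1 :: real)"
      by (simp add: minus_one_mult_self)
    have "(-1)^n * (1 / real (n + 1)) * (x - 1)^(Suc n) = ((-1) ^ n * (-1) ^ Suc n) * ((1 - x) ^ Suc n / real (Suc n))"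
      unfolding p by simp
    also have "\<dots> = - lg n u" unfolding m by (simp add: lg_def x_def)
    finally show "(-1)^n * (1 / real (n + 1)) * (x - 1)^(Suc n) = - lg n u" .
  qed
  also have "(\<Sum>n. - lg n u) = - (\<Sum>n. lg n u)" by (rule suminf_minus[OF summ])
  finally have "(\<Sum>n. lg n u) = u" by (simp add: x_def)
  then show ?thesis using summ by (simp add: summable_sums_iff)
qed

lemma range_Suc_eq: "range Suc = {1::nat..}"
proof (intro equalityI subsetI)
  fix x assume "x \<in> {1::nat..}"
  then have "x = Suc (x - 1)" by simp
  then show "x \<in> range Suc" by (rule image_eqI) simp
qed auto

lemma lw_hs:
  assumes u: "u > 0" shows "((\<lambda>k. lw k u) has_sum (- of_real u)) {1..}"
proof -
  have s: "(\<lambda>n. lw (Suc n) u) sums (- of_real u)"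
    using sums_minus[OF sums_of_real[OF lg_sums[OF u]]] by (simp add: lw_Suc)
  have ns: "summable (\<lambda>n. norm (lw (Suc n) u))"
    using lg_sums[OF u] by (simp add: lw_norm[OF u] sums_iff)
  have "((\<lambda>n. lw (Suc n) u) has_sum (- of_real u)) UNIV"
    by (rule norm_summable_imp_has_sum[OF ns s])
  then have "((\<lambda>k. lw k u) has_sum (- of_real u)) (range Suc)"
    by (subst has_sum_reindex) (auto simp: o_def)
  then show ?thesis by (simp add: range_Suc_eq)
qed

lemma nlw_hs:
  assumes u: "u > 0" shows "((\<lambda>k. norm (lw k u)) has_sum u) {1..}"
proof -
  have "((\<lambda>n. norm (lw (Suc n) u)) has_sum u) UNIV"
  proof (rule norm_summable_imp_has_sum)
    show "(\<lambda>n. norm (lw (Suc n) u)) sums u" using lg_sums[OF u] by (simp add: lw_norm[OF u])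
    then show "summable (\<lambda>n. norm (norm (lw (Suc n) u)))" by (simp add: sums_iff)
  qed
  then have "((\<lambda>k. norm (lw k u)) has_sum u) (range Suc)"
    by (subst has_sum_reindex) (auto simp: o_def)
  then show ?thesis by (simp add: range_Suc_eq)
qed




lemma sbm_real:
  fixes v :: "real \<Rightarrow> real" and \<phi> :: "real \<Rightarrow> complex"
  assumes "set_borel_measurable lborel {0<..} \<phi>" "continuous_on {0<..} v"
  shows "set_borel_measurable lborel {0<..} (\<lambda>u. v u * norm (\<phi> u))"
proof -
  have 1: "(\<lambda>x. indicator {0<..} x *\<^sub>R v x) \<in> borel_measurable lborel"
    using borel_measurable_continuous_on_indicator[OF _ assms(2)] by simp
  have 2: "(\<lambda>x. norm (indicator {0<..} x *\<^sub>R \<phi> x)) \<in> borel_measurable lborel"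
    using assms(1) unfolding set_borel_measurable_def by measurable
  have "(\<lambda>x. indicator {0<..} x *\<^sub>R (v x * norm (\<phi> x))) = (\<lambda>x. (indicator {0<..} x *\<^sub>R v x) * norm (indicator {0<..} x *\<^sub>R \<phi> x))"
    by (auto simp: indicator_def)
  then show ?thesis unfolding set_borel_measurable_def by (simp only:) (rule borel_measurable_times[OF 1 2])
qed

lemma lw_cont: "continuous_on {0<..} (lw k)"
  unfolding lw_def by (rule continuous_on_mult_left) (auto intro!: continuous_intros)

lemma lw_bound: assumes u: "u > 0" shows "norm (lw k u) \<le> 1"
proof (cases k)
  case 0
  have "lw 0 u = 0" by (simp add: lw_def)
  then show ?thesis using 0 by simp
next
  case (Suc n)
  have "lg n u = (1 - exp (- u)) ^ Suc n / real (Suc n)" by (simp add: lg_def)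
  also have "\<dots> \<le> (1 - exp (- u)) ^ Suc n" using u by (simp add: divide_le_eq)
  also have "\<dots> \<le> 1" using u by (intro power_le_one) auto
  finally show ?thesis using Suc lw_norm[OF u] by simp
qed

definition DD :: "nat \<Rightarrow> real \<Rightarrow> real" where "DD M u = u - (\<Sum>n<M. lg n u)"

lemma DD_hs:
  assumes u: "u > 0"
  shows "((\<lambda>k. norm (lw k u)) has_sum DD M u) ({1..} - {1..M})"
proof -
  have "((\<lambda>k. norm (lw k u)) has_sum (u - (\<Sum>k\<in>{1..M}. norm (lw k u)))) ({1..} - {1..M})"
    by (rule has_sum_Diff[OF nlw_hs[OF u] has_sum_finite]) auto
  moreover have "(\<Sum>k\<in>{1..M}. norm (lw k u)) = (\<Sum>n<M. lg n u)"
    using sum.atLeast1_atMost_eq[of "\<lambda>k. norm (lw k u)" M] by (simp add: lw_norm[OF u])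
  ultimately show ?thesis by (simp add: DD_def)
qed

lemma DD_nonneg: "u > 0 \<Longrightarrow> 0 \<le> DD M u"
  by (rule has_sum_nonneg[OF DD_hs]) auto

lemma DD_le: "u > 0 \<Longrightarrow> DD M u \<le> u"
  unfolding DD_def using lg_nonneg by (simp add: sum_nonneg)

lemma DD_lim: "u > 0 \<Longrightarrow> (\<lambda>M. DD M u) \<longlonglongrightarrow> 0"
proof -
  assume u: "u > 0"
  have "(\<lambda>M. \<Sum>n<M. lg n u) \<longlonglongrightarrow> u" using lg_sums[OF u] by (simp add: sums_def)
  then have "(\<lambda>M. u - (\<Sum>n<M. lg n u)) \<longlonglongrightarrow> u - u" by (intro tendsto_intros)
  then show ?thesis by (simp add: DD_def)
qed

lemma DD_sum: "u > 0 \<Longrightarrow> finite G \<Longrightarrow> G \<subseteq> {1..} - {1..M} \<Longrightarrow> (\<Sum>k\<in>G. norm (lw k u)) \<le> DD M u"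
  by (rule finite_sum_le_has_sum[OF DD_hs]) auto

lemma DD_cont: "continuous_on {0<..} (DD M)"
  unfolding DD_def lg_def by (auto intro!: continuous_intros)

lemma log_tail:
  fixes \<phi> :: "real \<Rightarrow> complex"
  assumes phi: "laplace_dom \<phi>" and t0: "t0 > 0" and e: "\<epsilon> > 0"
  shows "\<exists>F D. lapser.ok \<phi> t0 {1..} lw F D \<epsilon>"
proof -
  interpret lapser \<phi> t0 "{1..}" lw
    by unfold_locales (use phi t0 lw_cont lw_bound in auto)
  have m: "set_borel_measurable lborel {0<..} \<phi>" using phi by (simp add: laplace_dom_def)
  have iw: "set_integrable lborel {0<..} (\<lambda>u. exp (- (t0 * u)) * norm (\<phi> u) * u)"
  proof -
    have "set_integrable lborel {0<..} (\<lambda>u. norm (exp (- of_real (t0 * u)) * (- of_real u * \<phi> u)))"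
      by (rule set_integrable_norm[OF lapdom_int[OF laplace_dom_u[OF phi] t0]])
    then show ?thesis
      by (rule set_integrable_cong[THEN iffD1, rotated 3]) (auto simp: norm_mult norm_exp_eq_Re)
  qed
  have iD: "set_integrable lborel {0<..} (\<lambda>u. exp (- (t0 * u)) * norm (\<phi> u) * DD M u)" for M
  proof (rule set_integrable_bound[OF iw])
    have "set_borel_measurable lborel {0<..} (\<lambda>u. (exp (- (t0 * u)) * DD M u) * norm (\<phi> u))"
      by (rule sbm_real[OF m]) (auto intro!: continuous_intros DD_cont)
    then show "set_borel_measurable lborel {0<..} (\<lambda>u. exp (- (t0 * u)) * norm (\<phi> u) * DD M u)"
      by (simp add: ac_simps)
    show "AE x in lborel. x \<in> {0<..} \<longrightarrow> norm (exp (- (t0 * x)) * norm (\<phi> x) * DD M x) \<le> norm (exp (- (t0 * x)) * norm (\<phi> x) * x)"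
      using DD_nonneg DD_le by (auto simp: abs_mult intro!: mult_left_mono)
  qed
  have lim: "(\<lambda>M. LBINT u:{0<..}. exp (- (t0 * u)) * norm (\<phi> u) * DD M u) \<longlonglongrightarrow> 0"
  proof -
    have "(\<lambda>M. LBINT u. indicator {0<..} u *\<^sub>R (exp (- (t0 * u)) * norm (\<phi> u) * DD M u)) \<longlonglongrightarrow> integral\<^sup>L lborel (\<lambda>u::real. 0::real)"
    proof (rule integral_dominated_convergence[where w="\<lambda>u. indicator {0<..} u *\<^sub>R (exp (- (t0 * u)) * norm (\<phi> u) * u)"])
      show "(\<lambda>u. 0::real) \<in> borel_measurable lborel" by simp
      show "(\<lambda>u. indicator {0<..} u *\<^sub>R (exp (- (t0 * u)) * norm (\<phi> u) * DD M u)) \<in> borel_measurable lborel" for M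
        using iD[of M] unfolding set_integrable_def by (rule borel_measurable_integrable)
      show "integrable lborel (\<lambda>u. indicator {0<..} u *\<^sub>R (exp (- (t0 * u)) * norm (\<phi> u) * u))"
        using iw unfolding set_integrable_def .
      show "AE x in lborel. (\<lambda>M. indicator {0<..} x *\<^sub>R (exp (- (t0 * x)) * norm (\<phi> x) * DD M x)) \<longlonglongrightarrow> 0"
      proof (rule AE_I2)
        fix x :: real
        show "(\<lambda>M. indicator {0<..} x *\<^sub>R (exp (- (t0 * x)) * norm (\<phi> x) * DD M x)) \<longlonglongrightarrow> 0"
        proof (cases "x > 0")
          case True
          have "(\<lambda>M. exp (- (t0 * x)) * norm (\<phi> x) * DD M x) \<longlonglongrightarrow> exp (- (t0 * x)) * norm (\<phi> x) * 0"
            by (intro tendsto_intros DD_lim True)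
          then show ?thesis using True by simp
        qed simp
      qed
      show "AE x in lborel. norm (indicator {0<..} x *\<^sub>R (exp (- (t0 * x)) * norm (\<phi> x) * DD M x)) \<le> indicator {0<..} x *\<^sub>R (exp (- (t0 * x)) * norm (\<phi> x) * x)" for M
        using DD_nonneg DD_le by (auto simp: indicator_def abs_mult intro!: mult_left_mono)
    qed
    then show ?thesis by (simp add: set_lebesgue_integral_def)
  qed
  obtain M where M: "(LBINT u:{0<..}. exp (- (t0 * u)) * norm (\<phi> u) * DD M u) < \<epsilon>"
    using order_tendstoD(2)[OF lim e] by (auto simp: eventually_sequentially)
  have "ok {1..M} (DD M) \<epsilon>"
    unfolding ok_def using iD[of M] M DD_sum by auto
  then show ?thesis by blast
qed




lemma auc_transfer:
  assumes "abs_unif_conv U I g" "K \<subseteq> U" "\<And>i t. i \<in> I \<Longrightarrow> t \<in> K \<Longrightarrow> g' i t = g i t"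
  shows "abs_unif_conv K I g'"
proof -
  have eq: "(\<lambda>i. norm (g' i t)) summable_on I \<longleftrightarrow> (\<lambda>i. norm (g i t)) summable_on I" if "t \<in> K" for t
    by (rule summable_on_cong) (use assms(3) that in auto)
  have eq2: "(\<Sum>\<^sub>\<infinity>i\<in>I - F. norm (g' i t)) = (\<Sum>\<^sub>\<infinity>i\<in>I - F. norm (g i t))" if "t \<in> K" for t F
    by (rule infsum_cong) (use assms(3) that in auto)
  show ?thesis unfolding abs_unif_conv_def
  proof (intro conjI ballI allI impI)
    fix t assume t: "t \<in> K"
    then have "t \<in> U" using assms(2) by blast
    then have "(\<lambda>i. norm (g i t)) summable_on I" using assms(1) unfolding abs_unif_conv_def by blast
    then show "(\<lambda>i. norm (g' i t)) summable_on I" using eq[OF t] by simp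
  next
    fix \<epsilon> :: real assume "\<epsilon> > 0"
    then obtain F where F: "finite F" "F \<subseteq> I" "\<forall>t\<in>U. (\<Sum>\<^sub>\<infinity>i\<in>I - F. norm (g i t)) < \<epsilon>"
      using assms(1) unfolding abs_unif_conv_def by blast
    show "\<exists>F. finite F \<and> F \<subseteq> I \<and> (\<forall>t\<in>K. (\<Sum>\<^sub>\<infinity>i\<in>I - F. norm (g' i t)) < \<epsilon>)"
    proof (intro exI conjI ballI)
      fix t assume t: "t \<in> K"
      then have "t \<in> U" using assms(2) by blast
      then show "(\<Sum>\<^sub>\<infinity>i\<in>I - F. norm (g' i t)) < \<epsilon>" using F(3) eq2[OF t] by simp
    qed (use F in auto)
  qed
qed

lemma auc_empty: "abs_unif_conv {} I g"
  unfolding abs_unif_conv_def by auto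

lemma lap_cmult: "c * laplace (\<lambda>u. P u * \<phi> u) t = laplace (\<lambda>u. (c * P u) * \<phi> u) t"
  unfolding laplace_def set_integral_mult_right[symmetric] by (simp add: ac_simps)

lemma pw: "(of_real (exp (- u)) :: complex) ^ k = of_real (exp (- real k * u))"
  by (simp flip: of_real_power exp_of_nat_mult)

lemma compact_min:
  fixes K :: "real set"
  assumes "compact K" "K \<subseteq> {0<..}" "K \<noteq> {}"
  obtains t0 where "t0 > 0" "K \<subseteq> {t0..}"
proof -
  obtain x where "x \<in> K" "\<forall>y\<in>K. x \<le> y" using compact_attains_inf[OF assms(1,3)] by blast
  then show ?thesis using assms(2) that[of x] by auto
qed

locale bern =
  fixes \<alpha> :: "complex \<Rightarrow> complex" and \<nu> N :: nat and e :: "nat \<Rightarrow> nat"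
    and c :: "(nat \<Rightarrow> nat) \<Rightarrow> complex" and \<phi> :: "real \<Rightarrow> complex" and U :: "complex set"
  assumes tame: "tame \<alpha> \<nu>"
    and ex: "mps_expansion N e c U (\<lambda>z. (-1) ^ \<nu> * (Ln z) ^ \<nu> * \<alpha> z)"
    and phi: "laplace_dom \<phi>"
begin

definition bw where "bw i u = mps_term N e c i (of_real (exp (- u)))"
definition \<beta> where "\<beta> u = (of_real u) ^ \<nu> * \<alpha> (exp (- of_real u))"

lemma auc: "abs_unif_conv U (mps_index N) (mps_term N e c)"
  using ex by (simp add: mps_expansion_def)

lemma zU: "u > 0 \<Longrightarrow> of_real (exp (- u)) \<in> U - {1}"
  using ex by (auto simp: mps_expansion_def)

lemma bw_cont: "continuous_on {0<..} (bw i)"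
  unfolding bw_def mps_term_def by (auto intro!: continuous_intros)

lemma bw_bound: assumes u: "u > 0" shows "norm (bw i u) \<le> norm (c i)"
proof -
  have "norm (\<Prod>j<N. (of_real (exp (- u)) ^ e j - 1 :: complex) ^ i j) \<le> 1"
    unfolding prod_norm[symmetric] norm_power
  proof (rule prod_le_1)
    fix j assume "j \<in> {..<N}"
    have "norm (of_real (exp (- u)) ^ e j - 1 :: complex) \<le> 1"
      unfolding pw by (rule expm1_bound[OF _ u]) simp
    then show "0 \<le> norm (of_real (exp (- u)) ^ e j - 1 :: complex) ^ i j \<and>
          norm (of_real (exp (- u)) ^ e j - 1 :: complex) ^ i j \<le> 1"
      by (simp add: power_le_one)
  qed
  then show ?thesis unfolding bw_def mps_term_def norm_mult
    by (simp add: mult_left_le)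
qed

lemma bw_mdiff: assumes t: "t > 0"
  shows "c i * mdiff N e i (laplace \<phi>) t = laplace (\<lambda>u. bw i u * \<phi> u) t"
proof -
  have "c i * mdiff N e i (laplace \<phi>) t = c i * laplace (\<lambda>u. (\<Prod>j<N. (of_real (exp (- real (e j) * u)) - 1) ^ i j) * \<phi> u) t"
    using mdiff_laplace[OF phi] t by simp
  also have "\<dots> = laplace (\<lambda>u. (c i * (\<Prod>j<N. (of_real (exp (- real (e j) * u)) - 1) ^ i j)) * \<phi> u) t"
    by (rule lap_cmult)
  also have "\<dots> = laplace (\<lambda>u. bw i u * \<phi> u) t"
    unfolding bw_def mps_term_def pw by simp
  finally show ?thesis .
qed

lemma bw_summ: "u > 0 \<Longrightarrow> (\<lambda>i. norm (bw i u)) summable_on mps_index N"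
  using auc zU unfolding abs_unif_conv_def bw_def by blast

lemma bw_hs: assumes u: "u > 0" shows "((\<lambda>i. bw i u) has_sum \<beta> u) (mps_index N)"
proof -
  define z where "z = (of_real (exp (- u)) :: complex)"
  have z: "z \<in> U - {1}" using zU[OF u] by (simp add: z_def)
  have s: "(\<lambda>i. bw i u) summable_on mps_index N"
    by (rule abs_summable_summable) (use bw_summ[OF u] in simp)
  have "(\<Sum>\<^sub>\<infinity>i\<in>mps_index N. bw i u) = (-1) ^ \<nu> * (Ln z) ^ \<nu> * \<alpha> z"
    using ex z unfolding mps_expansion_def bw_def z_def by auto
  also have "Ln z = - of_real u" unfolding z_def by (simp add: Ln_of_real)
  also have "(-1) ^ \<nu> * (- of_real u) ^ \<nu> * \<alpha> z = \<beta> u"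
  proof -
    have "(-1) ^ \<nu> * (- of_real u :: complex) ^ \<nu> = (of_real u) ^ \<nu>"
      by (simp flip: power_mult_distrib)
    moreover have "exp (- of_real u) = z"
    proof -
      have "exp (- of_real u) = exp (of_real (- u) :: complex)" by simp
      then show ?thesis unfolding z_def exp_of_real .
    qed
    ultimately show ?thesis by (simp add: \<beta>_def)
  qed
  finally have "(\<Sum>\<^sub>\<infinity>i\<in>mps_index N. bw i u) = \<beta> u" .
  then show ?thesis using has_sum_infsum[OF s] by simp
qed

end




context bern begin

lemma lap_bw: "t0 > 0 \<Longrightarrow> lapser \<phi> t0 (mps_index N) bw"
  by unfold_locales (use phi bw_cont bw_bound in auto)

lemma bw_tail:
  assumes t0: "t0 > 0" and e: "\<epsilon> > 0"
  shows "\<exists>F D. lapser.ok \<phi> t0 (mps_index N) bw F D \<epsilon>"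
proof -
  interpret lapser \<phi> t0 "mps_index N" bw by (rule lap_bw[OF t0])
  define \<Phi> where "\<Phi> = (LBINT u:{0<..}. exp (- (t0 * u)) * norm (\<phi> u))"
  have iP: "set_integrable lborel {0<..} (\<lambda>u. exp (- (t0 * u)) * norm (\<phi> u))"
  proof -
    have "set_integrable lborel {0<..} (\<lambda>u. norm (exp (- of_real (t0 * u)) * \<phi> u))"
      by (rule set_integrable_norm[OF lapdom_int[OF phi t0]])
    then show ?thesis by (simp add: norm_mult norm_exp_eq_Re)
  qed
  have P0: "\<Phi> \<ge> 0" unfolding \<Phi>_def set_lebesgue_integral_def
    by (rule Bochner_Integration.integral_nonneg) (auto simp: indicator_def)
  define \<delta> where "\<delta> = \<epsilon> / (\<Phi> + 1)"
  have d0: "\<delta> > 0" using e P0 by (simp add: \<delta>_def)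
  obtain F where F: "finite F" "F \<subseteq> mps_index N"
    "\<forall>z\<in>U. (\<Sum>\<^sub>\<infinity>i\<in>mps_index N - F. norm (mps_term N e c i z)) < \<delta>"
    using auc d0 unfolding abs_unif_conv_def by blast
  have "ok F (\<lambda>u. \<delta>) \<epsilon>" unfolding ok_def
  proof (intro conjI allI impI)
    show "finite F" "F \<subseteq> mps_index N" by fact+
    show "set_integrable lborel {0<..} (\<lambda>u. exp (- (t0 * u)) * norm (\<phi> u) * \<delta>)"
      using iP by simp
    have "(LBINT u:{0<..}. exp (- (t0 * u)) * norm (\<phi> u) * \<delta>) = \<Phi> * \<delta>"
      unfolding \<Phi>_def by simp
    also have "\<dots> = \<epsilon> * (\<Phi> / (\<Phi> + 1))" using P0 by (simp add: \<delta>_def)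
    also have "\<dots> < \<epsilon> * 1" using e P0 by (intro mult_strict_left_mono) auto
    finally show "(LBINT u:{0<..}. exp (- (t0 * u)) * norm (\<phi> u) * \<delta>) < \<epsilon>" by simp
    fix u :: real and G assume u: "u > 0" and G: "finite G \<and> G \<subseteq> mps_index N - F"
    have "(\<Sum>i\<in>G. norm (bw i u)) \<le> (\<Sum>\<^sub>\<infinity>i\<in>mps_index N - F. norm (bw i u))"
      by (rule finite_sum_le_infsum) (use G summable_on_subset_banach[OF bw_summ[OF u], of "mps_index N - F"] in auto)
    also have "\<dots> < \<delta>" using F(3) zU[OF u] by (simp add: bw_def)
    finally show "(\<Sum>i\<in>G. norm (bw i u)) \<le> \<delta>" by simp
  qed
  then show ?thesis by blast
qed

lemma beta_cont: "continuous_on {0<..} \<beta>"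
proof -
  obtain r where r: "r > 0" "\<alpha> holomorphic_on (ball 0 1 \<union> ball 1 r) - {1}"
    using tame unfolding tame_def by blast
  have "(1::complex) \<notin> ball 0 1" by simp
  then have "ball (0::complex) 1 \<subseteq> (ball 0 1 \<union> ball 1 r) - {1}" by blast
  then have ca: "continuous_on (ball 0 1) \<alpha>"
    using r(2) holomorphic_on_subset holomorphic_on_imp_continuous_on by blast
  have c2: "continuous_on {0<..} (\<lambda>u::real. \<alpha> (exp (- of_real u)))"
  proof (rule continuous_on_compose2[OF ca])
    show "continuous_on {0<..} (\<lambda>u::real. exp (- of_real u :: complex))" by (intro continuous_intros)
    show "(\<lambda>u::real. exp (- of_real u :: complex)) ` {0<..} \<subseteq> ball 0 1"
      by (auto simp: norm_exp_eq_Re)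
  qed
  show ?thesis unfolding \<beta>_def[abs_def] by (intro continuous_intros c2)
qed

lemma beta_bound: "\<exists>B. \<forall>u>0. norm (\<beta> u) \<le> B"
proof -
  obtain F where F: "finite F" "F \<subseteq> mps_index N"
    "\<forall>z\<in>U. (\<Sum>\<^sub>\<infinity>i\<in>mps_index N - F. norm (mps_term N e c i z)) < 1"
    using auc unfolding abs_unif_conv_def by (meson zero_less_one)
  have "norm (\<beta> u) \<le> (\<Sum>i\<in>F. norm (c i)) + 1" if u: "u > 0" for u
  proof -
    have "norm (\<beta> u) = norm (\<Sum>\<^sub>\<infinity>i\<in>mps_index N. bw i u)" using infsumI[OF bw_hs[OF u]] by simp
    also have "\<dots> \<le> (\<Sum>\<^sub>\<infinity>i\<in>mps_index N. norm (bw i u))" by (rule norm_infsum_bound[OF bw_summ[OF u]])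
    also have "\<dots> \<le> (\<Sum>i\<in>F. norm (c i)) + 1"
    proof (rule infsum_le_finite_sums[OF bw_summ[OF u]])
      fix G assume G: "finite G" "G \<subseteq> mps_index N"
      have "(\<Sum>i\<in>G. norm (bw i u)) = (\<Sum>i\<in>G \<inter> F. norm (bw i u)) + (\<Sum>i\<in>G - F. norm (bw i u))"
        using G by (simp add: sum.Int_Diff)
      also have "(\<Sum>i\<in>G \<inter> F. norm (bw i u)) \<le> (\<Sum>i\<in>G \<inter> F. norm (c i))"
        by (intro sum_mono bw_bound u)
      also have "\<dots> \<le> (\<Sum>i\<in>F. norm (c i))" using F by (intro sum_mono2) auto
      also have "(\<Sum>i\<in>G - F. norm (bw i u)) \<le> (\<Sum>\<^sub>\<infinity>i\<in>mps_index N - F. norm (bw i u))"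
        by (rule finite_sum_le_infsum) (use G summable_on_subset_banach[OF bw_summ[OF u], of "mps_index N - F"] in auto)
      also have "\<dots> \<le> 1" using F(3) zU[OF u] by (simp add: bw_def less_imp_le)
      finally show "(\<Sum>i\<in>G. norm (bw i u)) \<le> (\<Sum>i\<in>F. norm (c i)) + 1" by simp
    qed
    finally show ?thesis .
  qed
  then show ?thesis by blast
qed

lemma beta_L: "laplace_dom (\<lambda>u. \<beta> u * \<phi> u)"
  using beta_bound laplace_dom_mult_bounded[OF phi beta_cont] by blast

end




lemma lw_fdiff:
  assumes phi: "laplace_dom \<phi>" and t: "t > 0"
  shows "(-1) ^ (k + 1) / of_nat k * (fdiff 1 ^^ k) (laplace \<phi>) t = laplace (\<lambda>u. lw k u * \<phi> u) t"
proof -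
  have "\<forall>t>0. (fdiff 1 ^^ k) (laplace \<phi>) t = laplace (\<lambda>u. ((of_real (exp (- 1 * u)) - 1) ^ k * 1) * \<phi> u) t"
    by (rule fdiff_pow_laplace[OF phi, where B=1]) auto
  then have "(fdiff 1 ^^ k) (laplace \<phi>) t = laplace (\<lambda>u. ((of_real (exp (- 1 * u)) - 1) ^ k * 1) * \<phi> u) t"
    using t by blast
  then have "(-1) ^ (k + 1) / of_nat k * (fdiff 1 ^^ k) (laplace \<phi>) t =
     laplace (\<lambda>u. ((-1) ^ (k + 1) / of_nat k * ((of_real (exp (- 1 * u)) - 1) ^ k * 1)) * \<phi> u) t"
    by (simp add: lap_cmult)
  also have "\<dots> = laplace (\<lambda>u. lw k u * \<phi> u) t" by (simp add: lw_def)
  finally show ?thesis .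
qed

lemma lap_lw:
  assumes "laplace_dom \<phi>" "t0 > 0" shows "lapser \<phi> t0 {1..} lw"
proof
  show "\<exists>B. \<forall>u>0. norm (lw i u) \<le> B" for i by (intro exI[of _ 1] allI impI lw_bound)
qed (use assms lw_cont in auto)

theorem mainTheorem8:
  fixes \<alpha> :: "complex \<Rightarrow> complex" and \<nu> N :: nat and e :: "nat \<Rightarrow> nat"
    and c :: "(nat \<Rightarrow> nat) \<Rightarrow> complex" and \<phi> :: "real \<Rightarrow> complex"
  assumes tame: "tame \<alpha> \<nu>"
    and expansion: "\<exists>U. mps_expansion N e c U (\<lambda>z. (-1) ^ \<nu> * (Ln z) ^ \<nu> * \<alpha> z)"
    and phi: "laplace_dom \<phi>"
  defines "f \<equiv> laplace \<phi>"
    and "\<beta> \<equiv> (\<lambda>u::real. (of_real u) ^ \<nu> * \<alpha> (exp (- of_real u)))"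
  shows "bernoulli_dom N e c f
    \<and> laplace_dom (\<lambda>u. \<beta> u * \<phi> u)
    \<and> (\<forall>t>0. bernoulli_op N e c f t = laplace (\<lambda>u. \<beta> u * \<phi> u) t)
    \<and> (\<forall>K. compact K \<and> K \<subseteq> {0<..} \<longrightarrow>
          abs_unif_conv K {1..} (\<lambda>k t. (-1) ^ (k + 1) / of_nat k * (fdiff 1 ^^ k) f t))
    \<and> laplace_dom (\<lambda>u. - of_real u * \<phi> u)
    \<and> (\<forall>t>0. (f has_vector_derivative laplace (\<lambda>u. - of_real u * \<phi> u) t) (at t)
          \<and> (\<Sum>\<^sub>\<infinity>k\<in>{1..}. (-1) ^ (k + 1) / of_nat k * (fdiff 1 ^^ k) f t)
              = laplace (\<lambda>u. - of_real u * \<phi> u) t)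
    \<and> (\<exists>\<psi>. laplace_dom \<psi> \<and> (\<forall>t>0. bernoulli_op N e c f t = laplace \<psi> t))"
proof -
  obtain U where ex: "mps_expansion N e c U (\<lambda>z. (-1) ^ \<nu> * (Ln z) ^ \<nu> * \<alpha> z)"
    using expansion by blast
  have B: "bern \<alpha> \<nu> N e c \<phi> U" by (rule bern.intro[OF tame ex phi])
  have beq: "\<beta> = bern.\<beta> \<alpha> \<nu>" by (rule ext) (simp add: \<beta>_def bern.\<beta>_def[OF B])
  have c1: "bernoulli_dom N e c f"
    unfolding bernoulli_dom_def
  proof (intro allI impI)
    fix K :: "real set" assume K: "compact K \<and> K \<subseteq> {0<..}"
    show "abs_unif_conv K (mps_index N) (\<lambda>i t. c i * mdiff N e i f t)"
    proof (cases "K = {}")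
      case True then show ?thesis by (simp add: auc_empty)
    next
      case False
      then obtain t0 where tt: "t0 > 0" "K \<subseteq> {t0..}" using compact_min K by blast
      interpret lapser \<phi> t0 "mps_index N" "bern.bw N e c" by (rule bern.lap_bw[OF B tt(1)])
      have "abs_unif_conv {t0..} (mps_index N) L"
        by (rule unif) (use bern.bw_tail[OF B tt(1)] in blast)
      then show ?thesis
      proof (rule auc_transfer[OF _ tt(2)])
        fix i t assume "t \<in> K"
        then have "t > 0" using K by auto
        then show "c i * mdiff N e i f t = L i t"
          unfolding L_def f_def by (rule bern.bw_mdiff[OF B])
      qed
    qed
  qed
  have c2: "laplace_dom (\<lambda>u. \<beta> u * \<phi> u)" unfolding beq by (rule bern.beta_L[OF B])
  have c3: "\<forall>t>0. bernoulli_op N e c f t = laplace (\<lambda>u. \<beta> u * \<phi> u) t"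
  proof (intro allI impI)
    fix t :: real assume t: "t > 0"
    interpret lapser \<phi> t "mps_index N" "bern.bw N e c" by (rule bern.lap_bw[OF B t])
    have hs: "((\<lambda>i. L i t) has_sum laplace (\<lambda>u. \<beta> u * \<phi> u) t) (mps_index N)"
      unfolding beq
    proof (rule hasum)
      show "\<exists>F D. ok F D \<epsilon>" if "\<epsilon> > 0" for \<epsilon> using bern.bw_tail[OF B t that] by blast
      show "laplace_dom (\<lambda>u. bern.\<beta> \<alpha> \<nu> u * \<phi> u)" by (rule bern.beta_L[OF B])
      show "((\<lambda>i. bern.bw N e c i u) has_sum bern.\<beta> \<alpha> \<nu> u) (mps_index N)" if "u > 0" for u
        by (rule bern.bw_hs[OF B that])
    qed simp
    have "bernoulli_op N e c f t = (\<Sum>\<^sub>\<infinity>i\<in>mps_index N. L i t)"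
      unfolding bernoulli_op_def L_def f_def using bern.bw_mdiff[OF B t] by simp
    also have "\<dots> = laplace (\<lambda>u. \<beta> u * \<phi> u) t" by (rule infsumI[OF hs])
    finally show "bernoulli_op N e c f t = laplace (\<lambda>u. \<beta> u * \<phi> u) t" .
  qed
  have c4: "\<forall>K. compact K \<and> K \<subseteq> {0<..} \<longrightarrow>
          abs_unif_conv K {1..} (\<lambda>k t. (-1) ^ (k + 1) / of_nat k * (fdiff 1 ^^ k) f t)"
  proof (intro allI impI)
    fix K :: "real set" assume K: "compact K \<and> K \<subseteq> {0<..}"
    show "abs_unif_conv K {1..} (\<lambda>k t. (-1) ^ (k + 1) / of_nat k * (fdiff 1 ^^ k) f t)"
    proof (cases "K = {}")
      case True then show ?thesis by (simp add: auc_empty)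
    next
      case False
      then obtain t0 where tt: "t0 > 0" "K \<subseteq> {t0..}" using compact_min K by blast
      interpret lapser \<phi> t0 "{1..}" lw by (rule lap_lw[OF phi tt(1)])
      have "abs_unif_conv {t0..} {1..} L"
        by (rule unif) (use log_tail[OF phi tt(1)] in blast)
      then show ?thesis
      proof (rule auc_transfer[OF _ tt(2)])
        fix k t assume "t \<in> K"
        then have "t > 0" using K by auto
        then show "(-1) ^ (k + 1) / of_nat k * (fdiff 1 ^^ k) f t = L k t"
          unfolding L_def f_def by (rule lw_fdiff[OF phi])
      qed
    qed
  qed
  have c5: "laplace_dom (\<lambda>u. - of_real u * \<phi> u)" by (rule laplace_dom_u[OF phi])
  have c6: "\<forall>t>0. (f has_vector_derivative laplace (\<lambda>u. - of_real u * \<phi> u) t) (at t)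
          \<and> (\<Sum>\<^sub>\<infinity>k\<in>{1..}. (-1) ^ (k + 1) / of_nat k * (fdiff 1 ^^ k) f t)
              = laplace (\<lambda>u. - of_real u * \<phi> u) t"
  proof (intro allI impI conjI)
    fix t :: real assume t: "t > 0"
    show "(f has_vector_derivative laplace (\<lambda>u. - of_real u * \<phi> u) t) (at t)"
      unfolding f_def by (rule laplace_deriv[OF phi t])
    interpret lapser \<phi> t "{1..}" lw by (rule lap_lw[OF phi t])
    have hs: "((\<lambda>k. L k t) has_sum laplace (\<lambda>u. - of_real u * \<phi> u) t) {1..}"
    proof (rule hasum)
      show "\<exists>F D. ok F D \<epsilon>" if "\<epsilon> > 0" for \<epsilon> using log_tail[OF phi t that] by blast
      show "laplace_dom (\<lambda>u. - of_real u * \<phi> u)" by (rule c5)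
      show "((\<lambda>k. lw k u) has_sum - of_real u) {1..}" if "u > 0" for u by (rule lw_hs[OF that])
    qed simp
    have "(\<Sum>\<^sub>\<infinity>k\<in>{1..}. (-1) ^ (k + 1) / of_nat k * (fdiff 1 ^^ k) f t) = (\<Sum>\<^sub>\<infinity>k\<in>{1..}. L k t)"
      unfolding L_def f_def using lw_fdiff[OF phi t] by simp
    also have "\<dots> = laplace (\<lambda>u. - of_real u * \<phi> u) t" by (rule infsumI[OF hs])
    finally show "(\<Sum>\<^sub>\<infinity>k\<in>{1..}. (-1) ^ (k + 1) / of_nat k * (fdiff 1 ^^ k) f t) = laplace (\<lambda>u. - of_real u * \<phi> u) t" .
  qed
  have c7: "\<exists>\<psi>. laplace_dom \<psi> \<and> (\<forall>t>0. bernoulli_op N e c f t = laplace \<psi> t)"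
    using c2 c3 by blast
  show ?thesis using c1 c2 c3 c4 c5 c6 c7 by blast
qed



end
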